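(* Let $\widehat{\mathbf M}=(\hat{\mathbb X},\hat{\mathbb U},\mathbb Y,\hat x_0,\hat{\mathbf t},\hat h)$ and $\mathbf M=(\mathbb X,\mathbb U,\mathbb Y,x_0,\mathbf t,h)$ be gMDPs with $\widehat{\mathbf M}\preceq^\delta_\epsilon\mathbf M$ via relation $\mathcal R$, interface $\mathcal U_v$ and lifted kernel $\mathbb W_{\mathbf t}$, let $\psi$ be an scLTL formula with DFA $\mathcal A_\psi=(Q,q_0,\Sigma,F,\tau)$, and let $\mu:\hat{\mathbb X}\times Q\to\hat{\mathbb U}$ be a mapping. Let $V:\hat{\mathbb X}\times Q\to[0,1]$ and $V_{\|}:\hat{\mathbb X}\times\mathbb X\times Q\to[0,1]$ satisfy $V(\hat x,q)\le V_{\|}(\hat x,x,q)$ for all $(\hat x,x)\in\mathcal R$ and $q\in Q$. Then $$\mathbf T^\mu_{\epsilon,\delta}(V)(\hat x,q)\le\mathbf T^\mu(V_{\|})(\hat x,x,q)\qquad\forall(\hat x,x)\in\mathcal R,\ q\in Q,$$ where $\mathbf T^\mu_{\epsilon,\delta}$ is the $(\epsilon,\delta)$-robust operator with respect to $\widehat{\mathbf M}$ and $\mathbf T^\mu$ is the Bellman operator with respect to $(\widehat{\mathbf M}\|_{\mathcal R}\mathbf M)\otimes\mathcal A_\psi$.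
   Context: A gMDP is $(\mathbb X,\mathbb U,\mathbb Y,x_0,\mathbf t,h)$ with Polish state/input spaces, output space $\mathbb Y$ with metric $\mathbf d_{\mathbb Y}$, initial state, stochastic kernel $\mathbf t(\cdot\mid x,u)$ and measurable output map $h$. $\widehat{\mathbf M}\preceq^\delta_\epsilon\mathbf M$ means there exist an interface $\mathcal U_v:\hat{\mathbb U}\times\hat{\mathbb X}\times\mathbb X\to\mathcal P(\mathbb U)$, a measurable relation $\mathcal R\subseteq\hat{\mathbb X}\times\mathbb X$ and a Borel kernel $\mathbb W_{\mathbf t}(\cdot\mid\hat u,\hat x,x)$ on $\hat{\mathbb X}\times\mathbb X$ with $(\hat x_0,x_0)\in\mathcal R$ and, for all $(\hat x,x)\in\mathcal R$: $\mathbf d_{\mathbb Y}(\hat h(\hat x),h(x))\le\epsilon$, and for all $\hat u$, $\mathbb W=\mathbb W_{\mathbf t}(\cdot\mid\hat u,\hat x,x)$ has marginals $\hat{\mathbf t}(\cdot\mid\hat x,\hat u)$ on $\hat{\mathbb X}$ and $\mathbf t(\cdot\mid x,\mathcal U_v(\hat u,\hat x,x))$ on $\mathbb X$, and $\mathbb W(\mathcal R)\ge1-\delta$. The coupling gMDP $\widehat{\mathbf M}\|_{\mathcal R}\mathbf M$ has state space $\hat{\mathbb X}\times\mathbb X$, input space $\hat{\mathbb U}$, initial state $(\hat x_0,x_0)$, kernel $\mathbb W_{\mathbf t}$ and output map $(\hat x,x)\mapsto h(x)$. $\Sigma=2^{\mathsf{AP}}$, $\mathsf L:\mathbb Y\to\Sigma$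 measurable labelling, $\mathcal A_\psi$ a DFA (accepting set $F$, transition $\tau:Q\times\Sigma\to Q$) for $\psi$. The product $(\widehat{\mathbf M}\|_{\mathcal R}\mathbf M)\otimes\mathcal A_\psi$ has states $\hat{\mathbb X}\times\mathbb X\times Q$ and kernel $\mathbf 1_{\{q'\}}(\tau(q,\mathsf L(h(x'))))\,\mathbb W_{\mathbf t}(d\hat x'\times dx'\mid\hat u,\hat x,x)$; its Bellman operator is $\mathbf T^\mu(V_{\|})(\hat x,x,q)=\int\max\{\mathbf 1_F(q'),V_{\|}(\hat x',x',q')\}$ against this kernel with $\hat u=\mu(\hat x,q)$. With $\mathcal N_\epsilon(y)=\{y'\in\mathbb Y:\mathbf d_{\mathbb Y}(y',y)\le\epsilon\}$ and $\bar\tau(q,\hat x')=\{\tau(q,\alpha):\alpha\in\mathsf L(\mathcal N_\epsilon(\hat h(\hat x')))\}$, the $(\epsilon,\delta)$-robust operator is $\mathbf T^\mu_{\epsilon,\delta}(V)(\hat x,q)=\mathbf L\big(\int_{\hat{\mathbb X}}\min_{q'\in\bar\tau(q,\hat x')}\max\{\mathbf 1_F(q'),V(\hat x',q')\}\,\hat{\mathbf t}(d\hat x'\mid\hat x,\mu(\hat x,q))-\delta\big)$ with $\mathbf L(r)=\min(1,\max(0,r))$. *)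

theory Defs
  imports "HOL-Probability.Probability"
begin

text \<open>A gMDP with Polish state space 'x, Polish input space 'u, metric output space 'y:
  the stochastic kernel t(. | x,u) is a Borel probability kernel and the output map h is measurable.
  (The initial state is passed separately where needed.)\<close>
definition gmdp_kernel ::
  "('x::polish_space \<Rightarrow> 'u::polish_space \<Rightarrow> 'x measure) \<Rightarrow> ('x \<Rightarrow> 'y::metric_space) \<Rightarrow> bool" where
  "gmdp_kernel t h \<longleftrightarrow>
     (\<forall>x u. prob_space (t x u) \<and> sets (t x u) = sets borel) \<and>
     (\<lambda>(x, u). t x u) \<in> borel \<rightarrow>\<^sub>M prob_algebra borel \<and>
     h \<in> borel \<rightarrow>\<^sub>M borel"

text \<open>Approximate simulation relation  Mhat \<preceq>^delta_eps M  via interface Uv, relation R and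
  lifted kernel W. Here t(. | x, Uv(uh,xh,x)) is the mixture of t(. | x,u) over u ~ Uv(uh,xh,x).\<close>
definition approx_sim ::
  "real \<Rightarrow> real
   \<Rightarrow> ('xh::polish_space \<Rightarrow> 'uh::polish_space \<Rightarrow> 'xh measure) \<Rightarrow> ('xh \<Rightarrow> 'y::metric_space) \<Rightarrow> 'xh
   \<Rightarrow> ('x::polish_space \<Rightarrow> 'u::polish_space \<Rightarrow> 'x measure) \<Rightarrow> ('x \<Rightarrow> 'y) \<Rightarrow> 'x
   \<Rightarrow> ('uh \<Rightarrow> 'xh \<Rightarrow> 'x \<Rightarrow> 'u measure)
   \<Rightarrow> ('xh \<times> 'x) set
   \<Rightarrow> ('uh \<Rightarrow> 'xh \<Rightarrow> 'x \<Rightarrow> ('xh \<times> 'x) measure) \<Rightarrow> bool" where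
  "approx_sim eps delta that hh xh0 t h x0 Uv R W \<longleftrightarrow>
     R \<in> sets (borel :: ('xh \<times> 'x) measure) \<and>
     (\<lambda>(uh, xh, x). W uh xh x) \<in> borel \<rightarrow>\<^sub>M subprob_algebra borel \<and>
     (\<forall>uh xh x. prob_space (Uv uh xh x) \<and> sets (Uv uh xh x) = sets borel) \<and>
     (\<forall>uh xh x. sets (W uh xh x) = sets borel) \<and>
     (xh0, x0) \<in> R \<and>
     (\<forall>(xh, x) \<in> R. dist (hh xh) (h x) \<le> eps \<and>
        (\<forall>uh. distr (W uh xh x) borel fst = that xh uh \<and>
              distr (W uh xh x) borel snd = (Uv uh xh x \<bind> (\<lambda>u. t x u)) \<and>
              measure (W uh xh x) R \<ge> 1 - delta))"

definition clip01 :: "real \<Rightarrow> real" where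
  "clip01 r = min 1 (max 0 r)"

definition tau_bar ::
  "('q \<Rightarrow> 'ap set \<Rightarrow> 'q) \<Rightarrow> ('y::metric_space \<Rightarrow> 'ap set) \<Rightarrow> ('xh \<Rightarrow> 'y) \<Rightarrow> real \<Rightarrow> 'q \<Rightarrow> 'xh \<Rightarrow> 'q set" where
  "tau_bar tau Lab hh eps q xh' = {tau q alpha | alpha. alpha \<in> Lab ` {y. dist y (hh xh') \<le> eps}}"

definition robust_op ::
  "('xh::polish_space \<Rightarrow> 'uh \<Rightarrow> 'xh measure) \<Rightarrow> ('xh \<Rightarrow> 'y::metric_space) \<Rightarrow> ('y \<Rightarrow> 'ap set)
   \<Rightarrow> ('q::finite \<Rightarrow> 'ap set \<Rightarrow> 'q) \<Rightarrow> 'q set \<Rightarrow> real \<Rightarrow> real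
   \<Rightarrow> ('xh \<Rightarrow> 'q \<Rightarrow> 'uh) \<Rightarrow> ('xh \<Rightarrow> 'q \<Rightarrow> real) \<Rightarrow> 'xh \<Rightarrow> 'q \<Rightarrow> real" where
  "robust_op that hh Lab tau F eps delta mu V xh q =
     clip01 ((\<integral>xh'. Min ((\<lambda>q'. max (indicator F q') (V xh' q')) ` tau_bar tau Lab hh eps q xh')
               \<partial>(that xh (mu xh q))) - delta)"

text \<open>The Bellman operator of the product (Mhat ||_R M) \<otimes> A_psi; the coupling has output map
  (xh,x) \<mapsto> h x.\<close>
definition bellman_op ::
  "('uh \<Rightarrow> 'xh \<Rightarrow> 'x \<Rightarrow> ('xh::polish_space \<times> 'x::polish_space) measure) \<Rightarrow> ('x \<Rightarrow> 'y) \<Rightarrow> ('y \<Rightarrow> 'ap set)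
   \<Rightarrow> ('q \<Rightarrow> 'ap set \<Rightarrow> 'q) \<Rightarrow> 'q set
   \<Rightarrow> ('xh \<Rightarrow> 'q \<Rightarrow> 'uh) \<Rightarrow> ('xh \<Rightarrow> 'x \<Rightarrow> 'q \<Rightarrow> real) \<Rightarrow> 'xh \<Rightarrow> 'x \<Rightarrow> 'q \<Rightarrow> real" where
  "bellman_op W h Lab tau F mu Vp xh x q =
     (\<integral>z. max (indicator F (tau q (Lab (h (snd z))))) (Vp (fst z) (snd z) (tau q (Lab (h (snd z)))))
        \<partial>(W (mu xh q) xh x))"

end

theory Submission
  imports Defs
begin

theorem lemma3:
  fixes that :: "'xh::polish_space \<Rightarrow> 'uh::polish_space \<Rightarrow> 'xh measure"
    and hh :: "'xh \<Rightarrow> 'y::metric_space" and xh0 :: 'xh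
    and t :: "'x::polish_space \<Rightarrow> 'u::polish_space \<Rightarrow> 'x measure"
    and h :: "'x \<Rightarrow> 'y" and x0 :: 'x
    and Uv :: "'uh \<Rightarrow> 'xh \<Rightarrow> 'x \<Rightarrow> 'u measure"
    and R :: "('xh \<times> 'x) set"
    and W :: "'uh \<Rightarrow> 'xh \<Rightarrow> 'x \<Rightarrow> ('xh \<times> 'x) measure"
    and eps delta :: real
    and Lab :: "'y \<Rightarrow> 'ap::finite set"
    and tau :: "'q::finite \<Rightarrow> 'ap set \<Rightarrow> 'q" and F :: "'q set"
    and mu :: "'xh \<Rightarrow> 'q \<Rightarrow> 'uh"
    and V :: "'xh \<Rightarrow> 'q \<Rightarrow> real"
    and Vp :: "'xh \<Rightarrow> 'x \<Rightarrow> 'q \<Rightarrow> real"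
  assumes Mhat: "gmdp_kernel that hh"
    and M: "gmdp_kernel t h"
    and sim: "approx_sim eps delta that hh xh0 t h x0 Uv R W"
    and Lab_meas: "Lab \<in> borel \<rightarrow>\<^sub>M count_space UNIV"
    and V_range: "\<And>xh q. V xh q \<in> {0..1}"
    and Vp_range: "\<And>xh x q. Vp xh x q \<in> {0..1}"
    and Vp_meas: "\<And>q. (\<lambda>(xh, x). Vp xh x q) \<in> borel_measurable borel"
    and V_le: "\<And>xh x q. (xh, x) \<in> R \<Longrightarrow> V xh q \<le> Vp xh x q"
  shows "\<forall>(xh, x) \<in> R. \<forall>q.
           robust_op that hh Lab tau F eps delta mu V xh q \<le> bellman_op W h Lab tau F mu Vp xh x q"
proof (intro ballI allI, clarify)
  fix xh x q assume xR: "(xh, x) \<in> R"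
  define uh where "uh = mu xh q"
  define Wm where "Wm = W uh xh x"
  define S where "S = (\<lambda>xh'. tau_bar tau Lab hh eps q xh')"
  define G where "G = (\<lambda>xh'. Min ((\<lambda>q'. max (indicator F q') (V xh' q')) ` S xh'))"
  define qn where "qn = (\<lambda>z::'xh \<times> 'x. tau q (Lab (h (snd z))))"
  define Phi where "Phi = (\<lambda>z::'xh \<times> 'x. max (indicator F (qn z)) (Vp (fst z) (snd z) (qn z)) :: real)"
  have Rb: "R \<in> sets borel" using sim unfolding approx_sim_def by blast
  have Wmeas: "(\<lambda>(uh, xh, x). W uh xh x) \<in> borel \<rightarrow>\<^sub>M subprob_algebra borel"
    using sim unfolding approx_sim_def by blast
  have sub: "subprob_space Wm"
  proof -
    have "(\<lambda>(uh, xh, x). W uh xh x) (uh, xh, x) \<in> space (subprob_algebra borel)"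
      using measurable_space[OF Wmeas, of "(uh, xh, x)"] by simp
    then show ?thesis unfolding Wm_def by (simp add: space_subprob_algebra)
  qed
  have finW: "finite_measure Wm" using sub unfolding subprob_space_def by blast
  have setsW: "sets Wm = sets borel" using sim unfolding approx_sim_def Wm_def by blast
  have spW: "space Wm = UNIV" using sets_eq_imp_space_eq[OF setsW] by simp
  have eps0: "0 \<le> eps" using sim xR unfolding approx_sim_def
  proof -
    have "dist (hh xh) (h x) \<le> eps" using sim xR unfolding approx_sim_def by auto
    then show ?thesis using zero_le_dist[of "hh xh" "h x"] by linarith
  qed
  have distr1: "distr Wm borel fst = that xh uh" and WR: "measure Wm R \<ge> 1 - delta"
    using sim xR unfolding approx_sim_def Wm_def by auto
  have delta0: "0 \<le> delta"
    using WR subprob_space.subprob_measure_le_1[OF sub, of R] by linarith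
  have finS: "finite (S xh')" for xh' by simp
  have inS: "(xh', x') \<in> R \<Longrightarrow> tau q (Lab (h x')) \<in> S xh'" for xh' x'
  proof -
    assume a: "(xh', x') \<in> R"
    then have "dist (hh xh') (h x') \<le> eps" using sim unfolding approx_sim_def by auto
    then have "h x' \<in> {y. dist y (hh xh') \<le> eps}" by (simp add: dist_commute)
    then show ?thesis unfolding S_def tau_bar_def by blast
  qed
  have inS0: "tau q (Lab (hh xh')) \<in> S xh'" for xh'
    unfolding S_def tau_bar_def using eps0 by auto
  have G0: "0 \<le> G xh'" for xh'
  proof -
    have "G xh' \<in> (\<lambda>q'. max (indicator F q') (V xh' q')) ` S xh'"
      unfolding G_def using finS inS0 by (intro Min_in) auto
    then show ?thesis by (auto simp: le_max_iff_disj indicator_def)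
  qed
  have G1: "G xh' \<le> 1" for xh'
  proof -
    have "G xh' \<le> max (indicator F (tau q (Lab (hh xh')))) (V xh' (tau q (Lab (hh xh'))))"
      unfolding G_def using finS inS0 by (intro Min_le) auto
    also have "\<dots> \<le> 1" using V_range by (auto simp: indicator_def)
    finally show ?thesis .
  qed
  have Phi0: "0 \<le> Phi z" for z unfolding Phi_def by (auto simp: max_def indicator_def)
  have Phi1: "Phi z \<le> 1" for z unfolding Phi_def using Vp_range by (auto simp: indicator_def)
  have pw: "G (fst z) \<le> Phi z + indicator (- R) z" for z
  proof (cases "z \<in> R")
    case True
    obtain a b where z: "z = (a, b)" by fastforce
    have "G a \<le> max (indicator F (qn z)) (V a (qn z))"
      unfolding G_def qn_def using finS inS[of a b] True z by (intro Min_le) auto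
    also have "\<dots> \<le> Phi z" unfolding Phi_def using V_le[of a b "qn z"] True z by (auto intro: max.mono)
    finally show ?thesis using True z by simp
  next
    case False
    then show ?thesis using G1[of "fst z"] Phi0[of z] by simp
  qed
  have qn_meas: "qn \<in> borel \<rightarrow>\<^sub>M count_space UNIV"
  proof -
    have "h \<in> borel \<rightarrow>\<^sub>M borel" using M unfolding gmdp_kernel_def by blast
    then have "(\<lambda>z::'xh\<times>'x. Lab (h (snd z))) \<in> borel \<rightarrow>\<^sub>M count_space UNIV"
    proof -
      have "snd \<in> (borel::('xh\<times>'x) measure) \<rightarrow>\<^sub>M borel"
        unfolding borel_prod[symmetric] by (rule measurable_snd)
      then have "(\<lambda>z::'xh\<times>'x. h (snd z)) \<in> borel \<rightarrow>\<^sub>M borel"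
        using \<open>h \<in> borel \<rightarrow>\<^sub>M borel\<close> by (rule measurable_compose)
      then show ?thesis using Lab_meas by (rule measurable_compose)
    qed
    then show ?thesis unfolding qn_def
      by (rule measurable_compose) simp
  qed
  have Phi_meas: "Phi \<in> borel_measurable borel"
  proof -
    have "(\<lambda>z. (\<lambda>q' z. max (indicator F q') (Vp (fst z) (snd z) q') :: real) (qn z) z) \<in> borel_measurable borel"
    proof (rule measurable_compose_countable'[OF _ qn_meas])
      fix q' :: 'q
      have "(\<lambda>z. Vp (fst z) (snd z) q') \<in> borel_measurable borel"
        using Vp_meas[of q'] by (simp add: case_prod_beta')
      then show "(\<lambda>z. max (indicator F q') (Vp (fst z) (snd z) q') :: real) \<in> borel_measurable borel"
        by measurable
    qed simp
    then show ?thesis unfolding Phi_def by simp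
  qed
  have Phi_int: "integrable Wm Phi"
  proof -
    interpret subprob_space Wm by (rule sub)
    show ?thesis
    proof (rule integrable_const_bound[where B=1])
      show "AE x in Wm. norm (Phi x) \<le> 1" using Phi0 Phi1 by (intro AE_I2) simp
      show "Phi \<in> borel_measurable Wm" using Phi_meas measurable_cong_sets[OF setsW refl] by blast
    qed
  qed
  have RHS0: "0 \<le> bellman_op W h Lab tau F mu Vp xh x q"
    unfolding bellman_op_def by (rule Bochner_Integration.integral_nonneg) (simp add: le_max_iff_disj)
  have bell: "bellman_op W h Lab tau F mu Vp xh x q = integral\<^sup>L Wm Phi"
    unfolding bellman_op_def Phi_def qn_def Wm_def uh_def by simp
  have rob: "robust_op that hh Lab tau F eps delta mu V xh q = clip01 (integral\<^sup>L (that xh uh) G - delta)"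
    unfolding robust_op_def G_def S_def uh_def by simp
  show "robust_op that hh Lab tau F eps delta mu V xh q \<le> bellman_op W h Lab tau F mu Vp xh x q"
  proof (cases "integrable (that xh uh) G")
    case False
    then show ?thesis using rob RHS0 delta0 by (simp add: not_integrable_integral_eq clip01_def)
  next
    case True
    have fstm: "fst \<in> Wm \<rightarrow>\<^sub>M borel"
      by (simp add: measurable_cong_sets[OF setsW refl] borel_prod[symmetric])
    have Gm: "G \<in> borel_measurable borel"
      using borel_measurable_integrable[OF True] sim
      by (metis Mhat gmdp_kernel_def measurable_cong_sets)
    have "integral\<^sup>L (that xh uh) G = integral\<^sup>L Wm (\<lambda>z. G (fst z))"
      using integral_distr[OF fstm Gm] distr1 by simp
    also have "\<dots> \<le> integral\<^sup>L Wm (\<lambda>z. Phi z + indicator (- R) z)"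
    proof (rule integral_mono)
      show "integrable Wm (\<lambda>z. G (fst z))"
        using True integrable_distr_eq[OF fstm Gm] distr1 by simp
      have "- R \<in> sets Wm" using Rb setsW by simp
      then show "integrable Wm (\<lambda>z. Phi z + indicator (- R) z)"
        using Phi_int sub by (intro Bochner_Integration.integrable_add integrable_real_indicator)
          (auto simp: less_top[symmetric] finite_measure.emeasure_finite[OF finW])
    qed (use pw in auto)
    also have "\<dots> = integral\<^sup>L Wm Phi + measure Wm (- R)"
    proof -
      have "- R \<in> sets Wm" using Rb setsW by simp
      then show ?thesis
        using Phi_int sub by (subst Bochner_Integration.integral_add)
          (auto intro!: integrable_real_indicator simp: less_top[symmetric] finite_measure.emeasure_finite[OF finW] spW)
    qed
    also have "measure Wm (- R) \<le> delta"
    proof -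
      have "- R = space Wm - R" using spW by auto
      moreover have "R \<in> sets Wm" using Rb setsW by simp
      ultimately have "measure Wm (- R) = measure Wm (space Wm) - measure Wm R"
        using sub by (simp add: finite_measure.finite_measure_compl[OF finW])
      then show ?thesis using WR subprob_space.subprob_measure_le_1[OF sub, of "space Wm"] by linarith
    qed
    finally have "integral\<^sup>L (that xh uh) G - delta \<le> integral\<^sup>L Wm Phi" by simp
    then show ?thesis using rob bell RHS0 by (simp add: clip01_def)
  qed
qed

end
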